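(* Let $\Psi$ be a reconstructor, let $\delta_1,\delta_2\ge0$ with corresponding data $y^{\delta_1},y^{\delta_2}\in\mathbb{R}^m$, and let $x\in\mathcal{X}$. Then $$\mathcal{J}_{\Psi,\delta_1}(x)\le 2\mathcal{J}_{\Psi,\delta_2}(x)+2\|y^{\delta_1}-y^{\delta_2}\|_2^2+\lambda\,\|w(\Psi(y^{\delta_1}))-w(\Psi(y^{\delta_2}))\|_1\,\|\,|Dx|\,\|_1,$$ where $\mathcal{J}_{\Psi,\delta}(x)=\|Kx-y^\delta\|_2^2+\lambda\|w(\Psi(y^\delta))\odot|Dx|\|_1$.
   Context: Let $K\in\mathbb{R}^{m\times n}$, and let $D_h,D_v\in\mathbb{R}^{n\times n}$ be the discrete horizontal and vertical difference operators; $|Dx|\in\mathbb{R}^n$, $(|Dx|)_i=\sqrt{(D_hx)_i^2+(D_vx)_i^2}$. $\mathcal{X}=\{x\in\mathbb{R}^n: x_i\ge 0\ \forall i\}$. Fix $\lambda>0$, $\eta>0$, $p\in(0,1)$, and for $\tilde x\in\mathbb{R}^n$ define $(w(\tilde{x}))_i=\big(\eta/\sqrt{\eta^2+(|D\tilde{x}|)_i^2}\big)^{1-p}$. A reconstructor is a Lipschitz continuous map $\Psi:\mathbb{R}^m\to\mathbb{R}^n$. For $\delta\ge0$, $y^\delta=Kx^{GT}+e$ with $x^{GT}\in\mathcal{X}$ and $\|e\|_2\le\delta$. $\odot$ is the entrywise product. *)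

theory Defs
  imports "HOL-Analysis.Analysis"
begin

definition gradmag :: "real^'n^'n \<Rightarrow> real^'n^'n \<Rightarrow> real^'n \<Rightarrow> real^'n" where
  "gradmag Dh Dv x = (\<chi> i. sqrt (((Dh *v x) $ i)^2 + ((Dv *v x) $ i)^2))"

definition nonneg_set :: "(real^'n) set" where
  "nonneg_set = {x. \<forall>i. x $ i \<ge> 0}"

definition weight :: "real \<Rightarrow> real \<Rightarrow> real^'n^'n \<Rightarrow> real^'n^'n \<Rightarrow> real^'n \<Rightarrow> real^'n" where
  "weight \<eta> p Dh Dv xt = (\<chi> i. (\<eta> / sqrt (\<eta>^2 + (gradmag Dh Dv xt $ i)^2)) powr (1 - p))"

definition norm1 :: "real^'n \<Rightarrow> real" where
  "norm1 v = (\<Sum>i\<in>UNIV. \<bar>v $ i\<bar>)"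

definition emult :: "real^'n \<Rightarrow> real^'n \<Rightarrow> real^'n" where
  "emult u v = (\<chi> i. u $ i * v $ i)"

definition reconstructor :: "(real^'m \<Rightarrow> real^'n) \<Rightarrow> bool" where
  "reconstructor \<Psi> \<longleftrightarrow> (\<exists>L. L > 0 \<and> L-lipschitz_on UNIV \<Psi>)"

definition Jfun :: "real^'n^'m \<Rightarrow> real^'n^'n \<Rightarrow> real^'n^'n \<Rightarrow> real \<Rightarrow> real \<Rightarrow> real
    \<Rightarrow> (real^'m \<Rightarrow> real^'n) \<Rightarrow> real^'m \<Rightarrow> real^'n \<Rightarrow> real" where
  "Jfun K Dh Dv lam \<eta> p \<Psi> y x =
     (norm (K *v x - y))^2 + lam * norm1 (emult (weight \<eta> p Dh Dv (\<Psi> y)) (gradmag Dh Dv x))"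

end

theory Submission
  imports Defs
begin

theorem lemma7:
  fixes K :: "real^'n^'m" and Dh Dv :: "real^'n^'n"
    and lam \<eta> p \<delta>1 \<delta>2 :: real
    and \<Psi> :: "real^'m \<Rightarrow> real^'n"
    and xgt1 xgt2 x :: "real^'n" and e1 e2 y1 y2 :: "real^'m"
  assumes "lam > 0" and "\<eta> > 0" and "0 < p" and "p < 1"
    and "reconstructor \<Psi>"
    and "\<delta>1 \<ge> 0" and "\<delta>2 \<ge> 0"
    and "xgt1 \<in> nonneg_set" and "xgt2 \<in> nonneg_set"
    and "norm e1 \<le> \<delta>1" and "norm e2 \<le> \<delta>2"
    and "y1 = K *v xgt1 + e1" and "y2 = K *v xgt2 + e2"
    and "x \<in> nonneg_set"
  shows "Jfun K Dh Dv lam \<eta> p \<Psi> y1 x \<le>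
           2 * Jfun K Dh Dv lam \<eta> p \<Psi> y2 x + 2 * (norm (y1 - y2))^2
           + lam * norm1 (weight \<eta> p Dh Dv (\<Psi> y1) - weight \<eta> p Dh Dv (\<Psi> y2))
               * norm1 (gradmag Dh Dv x)"
proof -
  define w1 where "w1 = weight \<eta> p Dh Dv (\<Psi> y1)"
  define w2 where "w2 = weight \<eta> p Dh Dv (\<Psi> y2)"
  define g where "g = gradmag Dh Dv x"
  have g0: "\<And>i. g $ i \<ge> 0" unfolding g_def gradmag_def by simp
  have gle: "\<And>i. g $ i \<le> norm1 g"
  proof -
    fix i
    have "g $ i = \<bar>g $ i\<bar>" using g0[of i] by simp
    also have "\<dots> \<le> (\<Sum>j\<in>UNIV. \<bar>g $ j\<bar>)"
      by (rule member_le_sum) auto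
    finally show "g $ i \<le> norm1 g" unfolding norm1_def .
  qed
  have n1g: "norm1 g \<ge> 0" unfolding norm1_def by (simp add: sum_nonneg)
  have n2: "norm1 (emult w2 g) \<ge> 0" unfolding norm1_def by (simp add: sum_nonneg)
  have key: "norm1 (emult w1 g) \<le> norm1 (emult w2 g) + norm1 (w1 - w2) * norm1 g"
  proof -
    have "norm1 (emult w1 g) = (\<Sum>i\<in>UNIV. \<bar>w1 $ i * g $ i\<bar>)"
      unfolding norm1_def emult_def by simp
    also have "\<dots> \<le> (\<Sum>i\<in>UNIV. \<bar>w2 $ i * g $ i\<bar> + \<bar>w1 $ i - w2 $ i\<bar> * norm1 g)"
    proof (rule sum_mono)
      fix i
      have "\<bar>w1 $ i * g $ i\<bar> = \<bar>w2 $ i * g $ i + (w1 $ i - w2 $ i) * g $ i\<bar>"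
        by (simp add: algebra_simps)
      also have "\<dots> \<le> \<bar>w2 $ i * g $ i\<bar> + \<bar>(w1 $ i - w2 $ i) * g $ i\<bar>"
        by (rule abs_triangle_ineq)
      also have "\<bar>(w1 $ i - w2 $ i) * g $ i\<bar> = \<bar>w1 $ i - w2 $ i\<bar> * g $ i"
        using g0[of i] by (simp add: abs_mult)
      also have "\<dots> \<le> \<bar>w1 $ i - w2 $ i\<bar> * norm1 g"
        using gle[of i] by (simp add: mult_left_mono)
      finally show "\<bar>w1 $ i * g $ i\<bar> \<le> \<bar>w2 $ i * g $ i\<bar> + \<bar>w1 $ i - w2 $ i\<bar> * norm1 g"
        by simp
    qed
    also have "\<dots> = norm1 (emult w2 g) + norm1 (w1 - w2) * norm1 g"
      unfolding norm1_def emult_def by (simp add: sum.distrib sum_distrib_right)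
    finally show ?thesis .
  qed
  have nrm: "(norm (K *v x - y1))^2 \<le> 2 * (norm (K *v x - y2))^2 + 2 * (norm (y1 - y2))^2"
  proof -
    have "norm (K *v x - y1) \<le> norm (K *v x - y2) + norm (y1 - y2)"
      by (metis norm_diff_triangle_ineq norm_minus_commute diff_add_cancel norm_triangle_ineq4 add_diff_cancel_left' diff_diff_eq2 norm_triangle_sub)
    hence "(norm (K *v x - y1))^2 \<le> (norm (K *v x - y2) + norm (y1 - y2))^2"
      by (simp add: power_mono)
    also have "\<dots> \<le> 2 * (norm (K *v x - y2))^2 + 2 * (norm (y1 - y2))^2"
      by (smt (verit) sum_squares_bound zero_le_power2 power2_sum power2_diff
          real_sqrt_sum_squares_triangle_ineq)
    finally show ?thesis .
  qed
  have "lam * norm1 (emult w1 g) \<le> 2 * (lam * norm1 (emult w2 g)) + lam * norm1 (w1 - w2) * norm1 g"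
    using key n2 assms(1) by (smt (verit) mult_left_mono distrib_left mult.assoc mult_nonneg_nonneg)
  with nrm show ?thesis unfolding Jfun_def w1_def[symmetric] w2_def[symmetric] g_def[symmetric]
    by (simp add: algebra_simps)
qed

end
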